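(* GREEDY and RANKING have online competitive ratio $0$ for IFM: for every $\varepsilon>0$ there exists an IFM instance on which $\min_{i\in I}\mathbb E[Z_i]\le\varepsilon\cdot\mathrm{OPT}$ under GREEDY, and likewise an instance on which this holds under RANKING. Since IFM is the special case of GFM in which every group is a singleton $\{i\}$, the same holds for GFM.
   Context: Model. An instance consists of a finite bipartite graph $(I,J,E)$, where $I$ is the set of offline agents and $J$ the set of online agent types, with $|J|=T$, together with problem-specific data described below. For $i\in I$ let $\mathcal N_i=\{j\in J:(i,j)\in E\}$ and for $j\in J$ let $\mathcal N_j=\{i\in I:(i,j)\in E\}$; write $i\sim j$ (equivalently $j\sim i$) when $(i,j)\in E$. There are $T$ rounds $t=1,\dots,T$; in each round exactly one online agent arrives, whose type is drawn uniformly at random from $J$ (each type with probability $1/T$), independently across rounds. Each offline agent can be matched at most once. When an online agent of type $j$ arrives, an online algorithm (which knows the instance but not future arrivals) must immediately and irrevocably either reject it or match it to a currently unmatched $i\in\mathcal N_j$. Let $Z_i$ be the indicator that offline agent $i$ is matched by the end. Objectives: IFM maximizes $\min_{i\in I}\mathbb E[Z_i]$; GFM, given a collection $\mathcal G$ of nonempty subsets of $I$ (groups, possibly overlapping), maximizes $\min_{G\in\mathcal G}\frac1{|G|}\sum_{i\in G}\mathbb E[Z_i]$. A clairvoyant policy observes the entire arrival sequence before choosing (possibly randomly) which arrivals to match to which compatible unmatched offline agents; the clairvoyant optimum $\mathrm{OPT}$ is the supremum of the objective over clairvoyant policies. GREEDY (for IFM): when an online agent of type $j$ arrives, if it has at least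 one currently unmatched neighbor, match it to one chosen uniformly at random among its currently unmatched neighbors; otherwise reject. RANKING: before the online phase draw a uniformly random permutation $\pi$ of $I$; when an online agent of type $j$ arrives, match it to the currently unmatched neighbor of $j$ that comes earliest in $\pi$, or reject if none exists. *)

theory Defs
  imports "HOL-Probability.Probability"
begin

text \<open>Instances: offline agents I, online types J (both encoded as nat sets),
  edge set E \<subseteq> I \<times> J.  T = card J rounds.\<close>

definition valid_instance :: "nat set \<Rightarrow> nat set \<Rightarrow> (nat \<times> nat) set \<Rightarrow> bool" where
  "valid_instance I J E \<longleftrightarrow> finite I \<and> finite J \<and> I \<noteq> {} \<and> J \<noteq> {} \<and> E \<subseteq> I \<times> J"

definition valid_groups :: "nat set \<Rightarrow> nat set set \<Rightarrow> bool" where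
  "valid_groups I \<G> \<longleftrightarrow> \<G> \<noteq> {} \<and> (\<forall>G\<in>\<G>. G \<noteq> {} \<and> G \<subseteq> I)"

text \<open>Arrival sequence: T = card J i.i.d. uniform types, i.e. uniform over J^T.\<close>
definition arrivals :: "nat set \<Rightarrow> nat list pmf" where
  "arrivals J = pmf_of_set {\<omega>. length \<omega> = card J \<and> set \<omega> \<subseteq> J}"

definition nbrs :: "nat set \<Rightarrow> (nat \<times> nat) set \<Rightarrow> nat \<Rightarrow> nat set" where
  "nbrs I E j = {i \<in> I. (i, j) \<in> E}"

text \<open>GREEDY; the state is the set of matched offline agents.\<close>
definition greedy_step :: "nat set \<Rightarrow> (nat \<times> nat) set \<Rightarrow> nat \<Rightarrow> nat set \<Rightarrow> nat set pmf" where
  "greedy_step I E j S =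
     (let C = nbrs I E j - S in
      if C = {} then return_pmf S else map_pmf (\<lambda>i. insert i S) (pmf_of_set C))"

fun greedy_run :: "nat set \<Rightarrow> (nat \<times> nat) set \<Rightarrow> nat list \<Rightarrow> nat set \<Rightarrow> nat set pmf" where
  "greedy_run I E [] S = return_pmf S"
| "greedy_run I E (j # \<omega>) S = bind_pmf (greedy_step I E j S) (greedy_run I E \<omega>)"

definition greedy_dist :: "nat set \<Rightarrow> nat set \<Rightarrow> (nat \<times> nat) set \<Rightarrow> nat set pmf" where
  "greedy_dist I J E = bind_pmf (arrivals J) (\<lambda>\<omega>. greedy_run I E \<omega> {})"

text \<open>RANKING; the permutation of I is a list enumerating I without repetition.\<close>
fun ranking_run :: "nat set \<Rightarrow> (nat \<times> nat) set \<Rightarrow> nat list \<Rightarrow> nat list \<Rightarrow> nat set \<Rightarrow> nat set" where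
  "ranking_run I E \<pi> [] S = S"
| "ranking_run I E \<pi> (j # \<omega>) S =
     (case find (\<lambda>i. i \<in> nbrs I E j - S) \<pi> of
        None \<Rightarrow> ranking_run I E \<pi> \<omega> S
      | Some i \<Rightarrow> ranking_run I E \<pi> \<omega> (insert i S))"

definition ranking_dist :: "nat set \<Rightarrow> nat set \<Rightarrow> (nat \<times> nat) set \<Rightarrow> nat set pmf" where
  "ranking_dist I J E =
     bind_pmf (arrivals J) (\<lambda>\<omega>.
       map_pmf (\<lambda>\<pi>. ranking_run I E \<pi> \<omega> {}) (pmf_of_set {\<pi>. distinct \<pi> \<and> set \<pi> = I}))"

text \<open>E[Z_i] under an outcome distribution over sets of matched offline agents.\<close>
definition match_prob :: "nat set pmf \<Rightarrow> nat \<Rightarrow> real" where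
  "match_prob D i = measure_pmf.prob D {S. i \<in> S}"

text \<open>Clairvoyant policies: after seeing the whole arrival sequence \<omega>, choose (randomly)
  a set S of offline agents that is matched by some matching of the arrivals of \<omega>.\<close>
definition feasible_matched :: "nat set \<Rightarrow> (nat \<times> nat) set \<Rightarrow> nat list \<Rightarrow> nat set \<Rightarrow> bool" where
  "feasible_matched I E \<omega> S \<longleftrightarrow> S \<subseteq> I \<and>
     (\<exists>f. inj_on f S \<and> (\<forall>i\<in>S. f i < length \<omega> \<and> (i, \<omega> ! f i) \<in> E))"

definition clairvoyant_policy :: "nat set \<Rightarrow> nat set \<Rightarrow> (nat \<times> nat) set \<Rightarrow> (nat list \<Rightarrow> nat set pmf) \<Rightarrow> bool" where
  "clairvoyant_policy I J E \<sigma> \<longleftrightarrow>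
     (\<forall>\<omega>\<in>set_pmf (arrivals J). \<forall>S\<in>set_pmf (\<sigma> \<omega>). feasible_matched I E \<omega> S)"

definition clairvoyant_dist :: "nat set \<Rightarrow> (nat list \<Rightarrow> nat set pmf) \<Rightarrow> nat set pmf" where
  "clairvoyant_dist J \<sigma> = bind_pmf (arrivals J) \<sigma>"

definition ifm_obj :: "nat set \<Rightarrow> (nat \<Rightarrow> real) \<Rightarrow> real" where
  "ifm_obj I p = Min (p ` I)"

definition gfm_obj :: "nat set set \<Rightarrow> (nat \<Rightarrow> real) \<Rightarrow> real" where
  "gfm_obj \<G> p = Min ((\<lambda>G. (\<Sum>i\<in>G. p i) / real (card G)) ` \<G>)"

definition OPT :: "nat set \<Rightarrow> nat set \<Rightarrow> (nat \<times> nat) set \<Rightarrow> ((nat \<Rightarrow> real) \<Rightarrow> real) \<Rightarrow> real" where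
  "OPT I J E obj = (SUP \<sigma>\<in>{\<sigma>. clairvoyant_policy I J E \<sigma>}. obj (match_prob (clairvoyant_dist J \<sigma>)))"

end

theory Submission
  imports Defs
begin

lemma prob_as_pmf: "measure_pmf.prob p X = pmf (map_pmf (\<lambda>x. x \<in> X) p) True"
  by (simp add: pmf_map vimage_def)

lemma prob_bind_pmf_of_set:
  assumes "finite A" "A \<noteq> {}"
  shows "measure_pmf.prob (bind_pmf (pmf_of_set A) f) X = (\<Sum>a\<in>A. measure_pmf.prob (f a) X) / card A"
  using assms by (simp add: prob_as_pmf map_bind_pmf pmf_bind_pmf_of_set)

lemma lists_decomp:
  assumes "finite A" "A \<noteq> {}"
  shows "pmf_of_set {\<omega>. length \<omega> = Suc k \<and> set \<omega> \<subseteq> A} =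
     bind_pmf (pmf_of_set A) (\<lambda>x. map_pmf (Cons x) (pmf_of_set {\<omega>. length \<omega> = k \<and> set \<omega> \<subseteq> A}))"
proof -
  let ?L = "\<lambda>k. {\<omega>. length \<omega> = k \<and> set \<omega> \<subseteq> A}"
  have fin: "finite (?L k)" using finite_lists_length_eq[OF assms(1), of k] by (simp add: conj_commute)
  have ne: "?L k \<noteq> {}" using assms by (auto intro!: exI[of _ "replicate k (SOME x. x \<in> A)"] simp: some_in_eq)
  have card: "card (?L k) = card A ^ k" using card_lists_length_eq[of A k] assms(1) by (simp add: conj_commute)
  have eq: "?L (Suc k) = (\<Union>x\<in>A. (Cons x) ` ?L k)"
    by (auto simp: length_Suc_conv)
  have "pmf_of_set (\<Union>x\<in>A. (Cons x) ` ?L k) = bind_pmf (pmf_of_set A) (\<lambda>x. pmf_of_set ((Cons x) ` ?L k))"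
    apply (rule pmf_of_set_UN[where n="card A ^ k"])
    using fin ne assms card by (auto simp: card_image disjoint_family_on_def)
  also have "\<dots> = bind_pmf (pmf_of_set A) (\<lambda>x. map_pmf (Cons x) (pmf_of_set (?L k)))"
    using fin ne by (simp add: map_pmf_of_set_inj)
  finally show ?thesis using eq by simp
qed

lemma sqrt_harm: "(\<Sum>k<n. 1 / (real k + 1)) \<le> 2 * sqrt (real n)"
proof (induction n)
  case 0 then show ?case by simp
next
  case (Suc n)
  have a: "sqrt (real n) \<le> sqrt (real n + 1)" by simp
  have b1: "1 \<le> sqrt (real n + 1)" by simp
  have b: "sqrt (real n + 1) \<le> real n + 1"
    using real_sqrt_le_iff[of "real n + 1" "(real n + 1)^2"] by (simp add: power2_eq_square)
  have sq: "(sqrt (real n + 1) - sqrt (real n)) * (sqrt (real n + 1) + sqrt (real n)) = 1"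
    by (simp add: algebra_simps)
  have "1 / (real n + 1) \<le> 2 * (sqrt (real n + 1) - sqrt (real n))"
  proof -
    have "1 / (real n + 1) \<le> 1 / sqrt (real n + 1)" using b b1 by (simp add: frac_le)
    also have "\<dots> = (sqrt (real n + 1) - sqrt (real n)) * (sqrt (real n + 1) + sqrt (real n)) / sqrt (real n + 1)"
      using sq by simp
    also have "\<dots> \<le> (sqrt (real n + 1) - sqrt (real n)) * 2"
    proof -
      have "(sqrt (real n + 1) + sqrt (real n)) / sqrt (real n + 1) \<le> 2"
        using a b1 by (simp add: divide_le_eq)
      moreover have "sqrt (real n + 1) - sqrt (real n) \<ge> 0" using a by simp
      ultimately have "(sqrt (real n + 1) - sqrt (real n)) * ((sqrt (real n + 1) + sqrt (real n)) / sqrt (real n + 1)) \<le> (sqrt (real n + 1) - sqrt (real n)) * 2"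
        by (rule mult_left_mono)
      then show ?thesis by simp
    qed
    finally show ?thesis by simp
  qed
  then show ?case using Suc.IH by (simp add: real_sqrt_le_iff algebra_simps)
qed

definition EE :: "nat \<Rightarrow> (nat \<times> nat) set" where
  "EE n = {(i, i) | i. i < n} \<union> {(i, 0) | i. i < n}"

lemma nbrs0: "nbrs {0..<n} (EE n) 0 = {0..<n}"
  by (auto simp: nbrs_def EE_def)

lemma nbrsj: "j \<noteq> 0 \<Longrightarrow> nbrs {0..<n} (EE n) j = {0..<n} \<inter> {j}"
  by (auto simp: nbrs_def EE_def)

definition bnd :: "nat \<Rightarrow> nat \<Rightarrow> nat \<Rightarrow> real" where
  "bnd n c k = (\<Sum>t<k. 1 / (real n * (real n - real c - real t)))"

lemma bnd_mono: "c + 1 + k \<le> n \<Longrightarrow> bnd n c k \<le> bnd n (c + 1) k"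
  unfolding bnd_def
proof (rule sum_mono)
  fix t assume "c + 1 + k \<le> n" "t \<in> {..<k}"
  then have p: "real n - real (c + 1) - real t > 0" by auto
  have n: "real n > 0" using \<open>c + 1 + k \<le> n\<close> by auto
  show "1 / (real n * (real n - real c - real t)) \<le> 1 / (real n * (real n - real (c + 1) - real t))"
    using p n by (intro divide_left_mono mult_left_mono mult_pos_pos) auto
qed

lemma bnd_Suc: "bnd n c (Suc k) = 1 / (real n * (real n - real c)) + bnd n (c + 1) k"
  unfolding bnd_def by (subst sum.lessThan_Suc_shift) (simp add: algebra_simps)

lemma bnd_nonneg: "c + k \<le> n \<Longrightarrow> 0 \<le> bnd n c k"
  unfolding bnd_def by (intro sum_nonneg) auto

abbreviation LL :: "nat \<Rightarrow> nat \<Rightarrow> nat list pmf" where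
  "LL n k \<equiv> pmf_of_set {\<omega>. length \<omega> = k \<and> set \<omega> \<subseteq> {0..<n}}"

lemma greedy_bound:
  assumes "n > 0"
  shows "S \<subseteq> {0..<n} \<Longrightarrow> 0 \<notin> S \<Longrightarrow> card S + k \<le> n \<Longrightarrow>
    measure_pmf.prob (bind_pmf (LL n k) (\<lambda>\<omega>. greedy_run {0..<n} (EE n) \<omega> S)) {T. 0 \<in> T} \<le> bnd n (card S) k"
proof (induction k arbitrary: S)
  case 0
  have "{\<omega>. length \<omega> = 0 \<and> set \<omega> \<subseteq> {0..<n}} = {[]}" by auto
  then show ?case using 0 by (simp add: pmf_of_set_singleton bnd_def bind_return_pmf measure_return indicator_def)
next
  case (Suc k)
  let ?I = "{0..<n}"
  let ?F = "\<lambda>S'. bind_pmf (LL n k) (\<lambda>\<omega>. greedy_run ?I (EE n) \<omega> S')"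
  let ?B1 = "bnd n (card S + 1) k"
  have finS: "finite S" using Suc.prems(1) finite_subset by blast
  have IH': "measure_pmf.prob (?F S') {T. 0 \<in> T} \<le> ?B1"
    if "S' \<subseteq> ?I" "0 \<notin> S'" "card S' = card S \<or> card S' = card S + 1" for S'
  proof -
    have "measure_pmf.prob (?F S') {T. 0 \<in> T} \<le> bnd n (card S') k"
      using Suc.IH[OF that(1,2)] that(3) Suc.prems(3) by auto
    also have "\<dots> \<le> ?B1"
      using that(3) Suc.prems(3) bnd_mono[of "card S" k n] by auto
    finally show ?thesis .
  qed
  have decomp: "bind_pmf (LL n (Suc k)) (\<lambda>\<omega>. greedy_run ?I (EE n) \<omega> S) =
      bind_pmf (pmf_of_set ?I) (\<lambda>x. bind_pmf (greedy_step ?I (EE n) x S) ?F)"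
  proof -
    have "bind_pmf (LL n (Suc k)) (\<lambda>\<omega>. greedy_run ?I (EE n) \<omega> S) =
       bind_pmf (pmf_of_set ?I) (\<lambda>x. bind_pmf (LL n k) (\<lambda>\<omega>. bind_pmf (greedy_step ?I (EE n) x S) (greedy_run ?I (EE n) \<omega>)))"
      using \<open>n > 0\<close> by (simp add: lists_decomp bind_assoc_pmf bind_map_pmf)
    also have "\<dots> = bind_pmf (pmf_of_set ?I) (\<lambda>x. bind_pmf (greedy_step ?I (EE n) x S) ?F)"
      by (rule bind_pmf_cong[OF refl], rule bind_commute_pmf)
    finally show ?thesis .
  qed
  have cS: "card S < n" using Suc.prems(3) by simp
  have B1nn: "0 \<le> ?B1" using Suc.prems(3) by (intro bnd_nonneg) simp
  define C where "C = ?I - S"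
  have finC: "finite C" by (simp add: C_def)
  have cardC: "card C = n - card S" unfolding C_def using Suc.prems(1) finS by (simp add: card_Diff_subset)
  have C0: "0 \<in> C" using Suc.prems(2) \<open>n > 0\<close> by (simp add: C_def)
  have Cne: "C \<noteq> {}" using C0 by auto
  have other: "measure_pmf.prob (bind_pmf (greedy_step ?I (EE n) x S) ?F) {T. 0 \<in> T} \<le> ?B1"
    if "x \<in> ?I" "x \<noteq> 0" for x
  proof (cases "x \<in> S")
    case True
    then have "greedy_step ?I (EE n) x S = return_pmf S"
      using that by (simp add: greedy_step_def nbrsj Let_def)
    then show ?thesis using IH'[of S] Suc.prems by (simp add: bind_return_pmf)
  next
    case False
    then have "greedy_step ?I (EE n) x S = return_pmf (insert x S)"
      using that by (simp add: greedy_step_def nbrsj Let_def pmf_of_set_singleton Int_commute insert_Diff_if)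
    then show ?thesis using IH'[of "insert x S"] Suc.prems that False finS
      by (simp add: bind_return_pmf)
  qed
  have zero: "measure_pmf.prob (bind_pmf (greedy_step ?I (EE n) 0 S) ?F) {T. 0 \<in> T} \<le> 1 / real (card C) + ?B1"
  proof -
    have "greedy_step ?I (EE n) 0 S = map_pmf (\<lambda>i. insert i S) (pmf_of_set C)"
      using Cne by (simp add: greedy_step_def nbrs0 Let_def C_def)
    then have e1: "measure_pmf.prob (bind_pmf (greedy_step ?I (EE n) 0 S) ?F) {T. 0 \<in> T} =
       (\<Sum>i\<in>C. measure_pmf.prob (?F (insert i S)) {T. 0 \<in> T}) / card C"
      using finC Cne by (simp add: bind_map_pmf prob_bind_pmf_of_set)
    have e2: "(\<Sum>i\<in>C. measure_pmf.prob (?F (insert i S)) {T. 0 \<in> T}) =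
        measure_pmf.prob (?F (insert 0 S)) {T. 0 \<in> T} + (\<Sum>i\<in>C-{0}. measure_pmf.prob (?F (insert i S)) {T. 0 \<in> T})"
      using finC C0 sum.remove[of C 0 "\<lambda>i. measure_pmf.prob (?F (insert i S)) {T. 0 \<in> T}"] by simp
    have a: "measure_pmf.prob (?F (insert 0 S)) {T. 0 \<in> T} \<le> 1" by (rule measure_pmf.prob_le_1)
    have b: "(\<Sum>i\<in>C-{0}. measure_pmf.prob (?F (insert i S)) {T. 0 \<in> T}) \<le> (\<Sum>i\<in>C-{0}. ?B1)"
    proof (rule sum_mono)
      fix i assume "i \<in> C - {0}"
      then show "measure_pmf.prob (?F (insert i S)) {T. 0 \<in> T} \<le> ?B1"
        using finS Suc.prems by (intro IH') (auto simp: C_def card_insert_if)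
    qed
    have c: "(\<Sum>i\<in>C-{0}. ?B1) \<le> real (card C) * ?B1"
      using finC C0 B1nn by (simp add: card_Diff_subset mult_right_mono)
    have d: "(\<Sum>i\<in>C. measure_pmf.prob (?F (insert i S)) {T. 0 \<in> T}) \<le> 1 + real (card C) * ?B1"
      using e2 a b c by linarith
    have cp: "real (card C) > 0" using finC Cne by (simp add: card_gt_0_iff)
    have "measure_pmf.prob (bind_pmf (greedy_step ?I (EE n) 0 S) ?F) {T. 0 \<in> T} \<le> (1 + real (card C) * ?B1) / card C"
      unfolding e1 using d cp by (intro divide_right_mono) auto
    also have "\<dots> = 1 / real (card C) + ?B1" using cp by (simp add: field_simps)
    finally show ?thesis .
  qed
  let ?P = "\<lambda>x. measure_pmf.prob (bind_pmf (greedy_step ?I (EE n) x S) ?F) {T. 0 \<in> T}"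
  have Ine: "?I \<noteq> {}" using \<open>n > 0\<close> by simp
  have s1: "measure_pmf.prob (bind_pmf (LL n (Suc k)) (\<lambda>\<omega>. greedy_run ?I (EE n) \<omega> S)) {T. 0 \<in> T}
     = (\<Sum>x\<in>?I. ?P x) / real n"
    unfolding decomp prob_bind_pmf_of_set[OF finite_atLeastLessThan Ine] by simp
  have s2: "(\<Sum>x\<in>?I. ?P x) = ?P 0 + (\<Sum>x\<in>?I-{0}. ?P x)"
    using \<open>n > 0\<close> sum.remove[of ?I 0 ?P] by simp
  have s3: "(\<Sum>x\<in>?I-{0}. ?P x) \<le> (\<Sum>x\<in>?I-{0}. ?B1)"
    using other by (intro sum_mono) auto
  have s4: "(\<Sum>x\<in>?I-{0}. ?B1) = (real n - 1) * ?B1"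
    using \<open>n > 0\<close> by (simp add: of_nat_diff)
  have s5: "(\<Sum>x\<in>?I. ?P x) \<le> 1 / real (card C) + real n * ?B1"
    using s2 s3 s4 zero by (simp add: algebra_simps)
  have cCr: "real (card C) = real n - real (card S)" using cardC cS by (simp add: of_nat_diff)
  have cCp: "real n - real (card S) > 0" using cS by simp
  have "measure_pmf.prob (bind_pmf (LL n (Suc k)) (\<lambda>\<omega>. greedy_run ?I (EE n) \<omega> S)) {T. 0 \<in> T}
      \<le> (1 / real (card C) + real n * ?B1) / real n"
    unfolding s1 using s5 \<open>n > 0\<close> by (intro divide_right_mono) auto
  also have "\<dots> = 1 / (real n * (real n - real (card S))) + ?B1"
    unfolding cCr using \<open>n > 0\<close> cCp by (simp add: field_simps)
  also have "\<dots> = bnd n (card S) (Suc k)" by (simp add: bnd_Suc)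
  finally show ?case .
qed

lemma find_filter_notin:
  "(\<And>x. x \<in> S \<Longrightarrow> \<not> P x) \<Longrightarrow> find P (filter (\<lambda>x. x \<notin> S) \<pi>) = find P \<pi>"
  by (induction \<pi>) auto

lemma ranking_run_filter:
  "ranking_run I E \<pi> \<omega> S = ranking_run I E (filter (\<lambda>x. x \<notin> S) \<pi>) \<omega> S"
proof (induction \<omega> arbitrary: S \<pi>)
  case Nil then show ?case by simp
next
  case (Cons j \<omega>)
  have f: "find (\<lambda>i. i \<in> nbrs I E j - S) (filter (\<lambda>x. x \<notin> S) \<pi>) = find (\<lambda>i. i \<in> nbrs I E j - S) \<pi>"
    by (rule find_filter_notin) auto
  show ?case
  proof (cases "find (\<lambda>i. i \<in> nbrs I E j - S) \<pi>")
    case None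
    have "ranking_run I E (filter (\<lambda>x. x \<notin> S) \<pi>) \<omega> S = ranking_run I E (filter (\<lambda>x. x \<notin> S) (filter (\<lambda>x. x \<notin> S) \<pi>)) \<omega> S"
      by (rule Cons.IH)
    moreover have "ranking_run I E \<pi> \<omega> S = ranking_run I E (filter (\<lambda>x. x \<notin> S) \<pi>) \<omega> S"
      by (rule Cons.IH)
    ultimately show ?thesis using None f by simp
  next
    case (Some i)
    have "ranking_run I E (filter (\<lambda>x. x \<notin> S) \<pi>) \<omega> (insert i S) =
          ranking_run I E (filter (\<lambda>x. x \<notin> insert i S) (filter (\<lambda>x. x \<notin> S) \<pi>)) \<omega> (insert i S)"
      by (rule Cons.IH)
    moreover have "filter (\<lambda>x. x \<notin> insert i S) (filter (\<lambda>x. x \<notin> S) \<pi>) = filter (\<lambda>x. x \<notin> insert i S) \<pi>"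
      by (auto simp: filter_filter intro!: filter_cong)
    moreover have "ranking_run I E \<pi> \<omega> (insert i S) = ranking_run I E (filter (\<lambda>x. x \<notin> insert i S) \<pi>) \<omega> (insert i S)"
      by (rule Cons.IH)
    ultimately show ?thesis using Some f by simp
  qed
qed

abbreviation DP :: "nat set \<Rightarrow> nat list pmf" where
  "DP U \<equiv> pmf_of_set (permutations_of_set U)"

lemma map_filter_DP:
  assumes "finite U"
  shows "map_pmf (filter P) (DP U) = DP {x \<in> U. P x}"
proof -
  have "map_pmf (filter P) (DP U) = map_pmf fst (map_pmf (partition P) (DP U))"
    by (simp add: map_pmf_comp partition_filter1 o_def)
  also have "\<dots> = DP {x \<in> U. P x}"
    using assms by (simp add: partition_random_permutations map_fst_pair_pmf)
  finally show ?thesis .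
qed

lemma ranking_eq_greedy:
  assumes "S \<subseteq> {0..<n}"
  shows "map_pmf (\<lambda>\<pi>. ranking_run {0..<n} (EE n) \<pi> \<omega> S) (DP ({0..<n} - S)) = greedy_run {0..<n} (EE n) \<omega> S"
  using assms
proof (induction \<omega> arbitrary: S)
  case Nil then show ?case by simp
next
  case (Cons j \<omega>)
  let ?I = "{0..<n}"
  let ?R = "\<lambda>\<pi> S. ranking_run ?I (EE n) \<pi> \<omega> S"
  show ?case
  proof (cases "j = 0")
    case True
    show ?thesis
    proof (cases "?I - S = {}")
      case True
      have DP0: "DP (?I - S) = return_pmf []" unfolding True by (simp add: pmf_of_set_singleton)
      have "map_pmf (\<lambda>\<pi>. ranking_run ?I (EE n) \<pi> \<omega> S) (DP (?I - S)) = greedy_run ?I (EE n) \<omega> S"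
        by (rule Cons.IH[OF Cons.prems])
      then have "return_pmf (ranking_run ?I (EE n) [] \<omega> S) = greedy_run ?I (EE n) \<omega> S"
        unfolding DP0 by simp
      then show ?thesis using True \<open>j = 0\<close>
        unfolding DP0 by (simp add: greedy_step_def nbrs0 bind_return_pmf)
    next
      case False
      have fin: "finite (?I - S)" by simp
      have step: "greedy_step ?I (EE n) 0 S = map_pmf (\<lambda>i. insert i S) (pmf_of_set (?I - S))"
        using False by (simp add: greedy_step_def nbrs0 Let_def)
      have "map_pmf (\<lambda>\<pi>. ranking_run ?I (EE n) \<pi> (j # \<omega>) S) (DP (?I - S)) =
         bind_pmf (pmf_of_set (?I - S)) (\<lambda>x. map_pmf (\<lambda>xs. ranking_run ?I (EE n) (x # xs) (j # \<omega>) S) (DP (?I - S - {x})))"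
        using fin False by (simp add: random_permutation_of_set map_bind_pmf map_pmf_def[symmetric] map_pmf_comp o_def)
      also have "\<dots> = bind_pmf (pmf_of_set (?I - S)) (\<lambda>x. map_pmf (\<lambda>xs. ?R xs (insert x S)) (DP (?I - insert x S)))"
      proof (rule bind_pmf_cong[OF refl])
        fix x assume x: "x \<in> set_pmf (pmf_of_set (?I - S))"
        then have xC: "x \<in> ?I - S" using fin False by simp
        have "\<And>xs. ranking_run ?I (EE n) (x # xs) (j # \<omega>) S = ?R xs (insert x S)"
        proof -
          fix xs
          have "ranking_run ?I (EE n) (x # xs) (j # \<omega>) S = ?R (x # xs) (insert x S)"
            using xC \<open>j = 0\<close> by (simp add: nbrs0)
          also have "\<dots> = ?R (filter (\<lambda>y. y \<notin> insert x S) (x # xs)) (insert x S)"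
            by (rule ranking_run_filter)
          also have "\<dots> = ?R (filter (\<lambda>y. y \<notin> insert x S) xs) (insert x S)" by simp
          also have "\<dots> = ?R xs (insert x S)"
            by (rule ranking_run_filter[symmetric])
          finally show "ranking_run ?I (EE n) (x # xs) (j # \<omega>) S = ?R xs (insert x S)" .
        qed
        moreover have "?I - S - {x} = ?I - insert x S" by auto
        ultimately show "map_pmf (\<lambda>xs. ranking_run ?I (EE n) (x # xs) (j # \<omega>) S) (DP (?I - S - {x})) =
            map_pmf (\<lambda>xs. ?R xs (insert x S)) (DP (?I - insert x S))" by simp
      qed
      also have "\<dots> = bind_pmf (pmf_of_set (?I - S)) (\<lambda>x. greedy_run ?I (EE n) \<omega> (insert x S))"
      proof (rule bind_pmf_cong[OF refl])
        fix x assume x: "x \<in> set_pmf (pmf_of_set (?I - S))"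
        then have xC: "x \<in> ?I - S" using fin False by simp
        then show "map_pmf (\<lambda>xs. ?R xs (insert x S)) (DP (?I - insert x S)) = greedy_run ?I (EE n) \<omega> (insert x S)"
          using Cons.prems by (intro Cons.IH) auto
      qed
      also have "\<dots> = greedy_run ?I (EE n) (j # \<omega>) S"
        using \<open>j = 0\<close> step by (simp add: bind_map_pmf)
      finally show ?thesis .
    qed
  next
    case False
    have nb: "nbrs ?I (EE n) j = ?I \<inter> {j}" using False by (rule nbrsj)
    show ?thesis
    proof (cases "j \<in> ?I - S")
      case False
      then have C: "nbrs ?I (EE n) j - S = {}" using nb by auto
      have rr: "\<And>\<pi>. ranking_run ?I (EE n) \<pi> (j # \<omega>) S = ?R \<pi> S"
      proof -
        fix \<pi>
        have "find (\<lambda>i. i \<in> nbrs ?I (EE n) j - S) \<pi> = None" using C by (auto simp add: find_None_iff)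
        then show "ranking_run ?I (EE n) \<pi> (j # \<omega>) S = ?R \<pi> S" by simp
      qed
      have ef: "(\<lambda>\<pi>. ranking_run ?I (EE n) \<pi> (j # \<omega>) S) = (\<lambda>\<pi>. ?R \<pi> S)" by (rule ext) (rule rr)
      have gs: "greedy_step ?I (EE n) j S = return_pmf S" using C by (simp add: greedy_step_def)
      show ?thesis unfolding ef Cons.IH[OF Cons.prems] by (simp add: gs bind_return_pmf)
    next
      case True
      then have C: "nbrs ?I (EE n) j - S = {j}" using nb by auto
      have fin: "finite (?I - S)" by simp
      have "map_pmf (\<lambda>\<pi>. ranking_run ?I (EE n) \<pi> (j # \<omega>) S) (DP (?I - S)) =
            map_pmf (\<lambda>\<pi>. ?R (filter (\<lambda>y. y \<notin> insert j S) \<pi>) (insert j S)) (DP (?I - S))"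
      proof (rule map_pmf_cong[OF refl])
        fix \<pi> assume "\<pi> \<in> set_pmf (DP (?I - S))"
        then have "\<pi> \<in> permutations_of_set (?I - S)" using fin by (subst (asm) set_pmf_of_set) auto
        then have "j \<in> set \<pi>" using True by (auto dest: permutations_of_setD)
        then have "find (\<lambda>i. i \<in> nbrs ?I (EE n) j - S) \<pi> = Some j"
          unfolding C by (induction \<pi>) auto
        then show "ranking_run ?I (EE n) \<pi> (j # \<omega>) S = ?R (filter (\<lambda>y. y \<notin> insert j S) \<pi>) (insert j S)"
          by (simp add: ranking_run_filter[of _ _ \<pi> \<omega> "insert j S"])
      qed
      also have "\<dots> = map_pmf (\<lambda>\<pi>. ?R \<pi> (insert j S)) (map_pmf (filter (\<lambda>y. y \<notin> insert j S)) (DP (?I - S)))"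
        by (simp add: map_pmf_comp)
      also have "map_pmf (filter (\<lambda>y. y \<notin> insert j S)) (DP (?I - S)) = DP (?I - insert j S)"
      proof -
        have "{x \<in> ?I - S. x \<notin> insert j S} = ?I - insert j S" by auto
        then show ?thesis using fin by (simp only: map_filter_DP)
      qed
      also have "map_pmf (\<lambda>\<pi>. ?R \<pi> (insert j S)) (DP (?I - insert j S)) = greedy_run ?I (EE n) \<omega> (insert j S)"
        using Cons.prems True by (intro Cons.IH) auto
      also have "\<dots> = greedy_run ?I (EE n) (j # \<omega>) S"
        using C by (simp add: greedy_step_def pmf_of_set_singleton bind_return_pmf)
      finally show ?thesis .
    qed
  qed
qed

lemma card_I: "card {0..<n} = (n::nat)" by simp

lemma arrivals_eq: "arrivals {0..<n} = LL n n"
  by (simp add: arrivals_def conj_commute)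

lemma greedy_prob0:
  assumes "n > 0"
  shows "match_prob (greedy_dist {0..<n} {0..<n} (EE n)) 0 \<le> 2 / sqrt (real n)"
proof -
  have "match_prob (greedy_dist {0..<n} {0..<n} (EE n)) 0 \<le> bnd n (card ({}::nat set)) n"
    unfolding match_prob_def greedy_dist_def arrivals_eq
    using greedy_bound[OF assms, of "{}" n] by simp
  also have "\<dots> = (\<Sum>t<n. 1 / (real n - real t)) / real n"
    unfolding bnd_def by (simp add: sum_divide_distrib ac_simps)
  also have "(\<Sum>t<n. 1 / (real n - real t)) = (\<Sum>k<n. 1 / (real k + 1))"
  proof -
    have "(\<Sum>t<n. 1 / (real n - real t)) = (\<Sum>t<n. (\<lambda>k. 1 / (real k + 1)) (n - Suc t))"
      by (intro sum.cong refl) (auto simp: of_nat_diff)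
    also have "\<dots> = (\<Sum>k<n. 1 / (real k + 1))" by (rule sum.nat_diff_reindex)
    finally show ?thesis .
  qed
  also have "(\<Sum>k<n. 1 / (real k + 1)) / real n \<le> 2 * sqrt (real n) / real n"
    using sqrt_harm[of n] assms by (intro divide_right_mono) auto
  also have "\<dots> = 2 / sqrt (real n)"
    using assms by (simp add: field_simps real_sqrt_mult[symmetric])
  finally show ?thesis .
qed

lemma ranking_eq: "ranking_dist {0..<n} {0..<n} (EE n) = greedy_dist {0..<n} {0..<n} (EE n)"
proof -
  have "{\<pi>. distinct \<pi> \<and> set \<pi> = {0..<n}} = permutations_of_set ({0..<n} - {})"
    by (auto simp: permutations_of_set_def)
  moreover have "\<And>\<omega>. map_pmf (\<lambda>\<pi>. ranking_run {0..<n} (EE n) \<pi> \<omega> {}) (DP ({0..<n} - {})) = greedy_run {0..<n} (EE n) \<omega> {}"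
    by (rule ranking_eq_greedy) simp
  ultimately show ?thesis unfolding ranking_dist_def greedy_dist_def by simp
qed

lemma pow_half:
  assumes "n \<ge> 1"
  shows "2 * (real n - 1) ^ n \<le> real n ^ n"
proof -
  define x where "x = real n"
  have xp: "x > 0" "x \<ge> 1" using assms by (auto simp: x_def)
  have b: "1 + real n * (1 / x) \<le> (1 + 1 / x) ^ n"
  proof (rule Bernoulli_inequality)
    have "0 \<le> 1 / x" using xp by simp
    then show "- 1 \<le> 1 / x" by linarith
  qed
  then have b2: "2 \<le> (1 + 1 / x) ^ n" using xp by (simp add: x_def)
  have "(1 + 1 / x) ^ n = (x + 1) ^ n / x ^ n" using xp by (simp add: field_simps power_divide)
  then have h1: "2 * x ^ n \<le> (x + 1) ^ n" using b2 xp by (simp add: field_simps)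
  have h2: "(x - 1) ^ n * (x + 1) ^ n \<le> x ^ n * x ^ n"
  proof -
    have "(x - 1) ^ n * (x + 1) ^ n = (x * x - 1) ^ n" by (simp add: power_mult_distrib[symmetric] algebra_simps)
    also have "\<dots> \<le> (x * x) ^ n" using xp mult_mono[of 1 x 1 x] by (intro power_mono) auto
    also have "\<dots> = x ^ n * x ^ n" by (simp add: power_mult_distrib)
    finally show ?thesis .
  qed
  have nn: "(x - 1) ^ n \<ge> 0" using xp by simp
  have "(2 * (x - 1) ^ n) * x ^ n \<le> (x - 1) ^ n * (x + 1) ^ n"
    using mult_left_mono[OF h1 nn] by (simp add: ac_simps)
  also have "\<dots> \<le> x ^ n * x ^ n" by (rule h2)
  finally have "(2 * (x - 1) ^ n) * x ^ n \<le> x ^ n * x ^ n" .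
  then have "2 * (x - 1) ^ n \<le> x ^ n" using xp by (simp add: mult_le_cancel_right)
  then show ?thesis by (simp add: x_def)
qed

lemma opt_policy:
  assumes "n > 0"
  shows "clairvoyant_policy {0..<n} {0..<n} (EE n) (\<lambda>\<omega>. return_pmf (set \<omega>))"
  unfolding clairvoyant_policy_def
proof (intro ballI)
  fix \<omega> S assume \<omega>: "\<omega> \<in> set_pmf (arrivals {0..<n})" and S: "S \<in> set_pmf (return_pmf (set \<omega>))"
  have "\<omega> \<in> {\<omega>. length \<omega> = n \<and> set \<omega> \<subseteq> {0..<n}}"
  proof -
    have fin: "finite {\<omega>. length \<omega> = n \<and> set \<omega> \<subseteq> {0..<n}}"
      using finite_lists_length_eq[of "{0..<n}" n] by (simp add: conj_commute)
    have ne: "{\<omega>. length \<omega> = n \<and> set \<omega> \<subseteq> {0..<n}} \<noteq> {}"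
      using assms by (auto intro!: exI[of _ "replicate n 0"])
    show ?thesis using \<omega> fin ne by (simp add: arrivals_eq)
  qed
  then have len: "length \<omega> = n" and sub: "set \<omega> \<subseteq> {0..<n}" by auto
  have SS: "S = set \<omega>" using S by simp
  define f where "f i = (LEAST k. k < length \<omega> \<and> \<omega> ! k = i)" for i
  have fP: "f i < length \<omega> \<and> \<omega> ! f i = i" if "i \<in> set \<omega>" for i
  proof -
    from that obtain k where "k < length \<omega>" "\<omega> ! k = i" by (auto simp: in_set_conv_nth)
    then show ?thesis unfolding f_def by (rule LeastI[of "\<lambda>k. k < length \<omega> \<and> \<omega> ! k = i", OF conjI])
  qed
  show "feasible_matched {0..<n} (EE n) \<omega> S"
    unfolding feasible_matched_def SS
  proof (intro conjI exI[of _ f])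
    show "set \<omega> \<subseteq> {0..<n}" by (rule sub)
    show "inj_on f (set \<omega>)"
      by (rule inj_onI) (metis fP)
    show "\<forall>i\<in>set \<omega>. f i < length \<omega> \<and> (i, \<omega> ! f i) \<in> EE n"
      using fP sub by (auto simp: EE_def)
  qed
qed

lemma opt_prob:
  assumes "n > 0" "i < n"
  shows "match_prob (clairvoyant_dist {0..<n} (\<lambda>\<omega>. return_pmf (set \<omega>))) i \<ge> 1 / 2"
proof -
  let ?L = "{\<omega>. length \<omega> = n \<and> set \<omega> \<subseteq> {0..<n}}"
  let ?L' = "{\<omega>. length \<omega> = n \<and> set \<omega> \<subseteq> {0..<n} - {i}}"
  have fin: "finite ?L"
    using finite_lists_length_eq[of "{0..<n}" n] by (simp add: conj_commute)
  have cL: "card ?L = n ^ n" using card_lists_length_eq[of "{0..<n}" n] by (simp add: conj_commute)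
  have cL': "card ?L' = (n - 1) ^ n" using card_lists_length_eq[of "{0..<n} - {i}" n] assms
    by (simp add: conj_commute)
  have eq: "?L \<inter> {\<omega>. i \<in> set \<omega>} = ?L - ?L'" by auto
  have sub: "?L' \<subseteq> ?L" by auto
  have "match_prob (clairvoyant_dist {0..<n} (\<lambda>\<omega>. return_pmf (set \<omega>))) i =
        measure_pmf.prob (pmf_of_set ?L) {\<omega>. i \<in> set \<omega>}"
    unfolding match_prob_def clairvoyant_dist_def arrivals_eq
    by (simp add: map_pmf_def[symmetric] vimage_def)
  also have "\<dots> = real (card (?L - ?L')) / real (n ^ n)"
  proof -
    have ne: "?L \<noteq> {}" using assms by (auto intro!: exI[of _ "replicate n 0"])
    have "measure_pmf.prob (pmf_of_set ?L) {\<omega>. i \<in> set \<omega>} = real (card (?L \<inter> {\<omega>. i \<in> set \<omega>})) / real (card ?L)"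
      by (rule measure_pmf_of_set[OF ne fin])
    then show ?thesis unfolding eq cL by simp
  qed
  also have "card (?L - ?L') = n ^ n - (n - 1) ^ n"
    using card_Diff_subset[OF finite_subset[OF sub fin] sub] cL cL' by simp
  finally have mp: "match_prob (clairvoyant_dist {0..<n} (\<lambda>\<omega>. return_pmf (set \<omega>))) i =
       real (n ^ n - (n - 1) ^ n) / real (n ^ n)" .
  have le: "(n - 1) ^ n \<le> n ^ n" by (intro power_mono) auto
  have h: "2 * (real n - 1) ^ n \<le> real n ^ n" using assms by (intro pow_half) auto
  have pos: "real n ^ n > 0" using assms by simp
  have "real (n ^ n - (n - 1) ^ n) = real n ^ n - (real n - 1) ^ n"
    using le assms by (simp add: of_nat_diff)
  then show ?thesis unfolding mp using h pos by (simp add: field_simps)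
qed

lemma obj_le1: "n > 0 \<Longrightarrow> ifm_obj {0..<n} (match_prob D) \<le> 1"
proof -
  assume "n > 0"
  then have "ifm_obj {0..<n} (match_prob D) \<le> match_prob D 0"
    unfolding ifm_obj_def by (intro Min_le) auto
  also have "\<dots> \<le> 1" unfolding match_prob_def by simp
  finally show ?thesis .
qed

lemma OPT_ge: assumes "n > 0" shows "OPT {0..<n} {0..<n} (EE n) (ifm_obj {0..<n}) \<ge> 1 / 2"
proof -
  let ?\<sigma> = "\<lambda>\<omega>. return_pmf (set \<omega>)"
  have "1 / 2 \<le> ifm_obj {0..<n} (match_prob (clairvoyant_dist {0..<n} ?\<sigma>))"
    unfolding ifm_obj_def using assms opt_prob[OF assms] by (subst Min_ge_iff) auto
  also have "\<dots> \<le> OPT {0..<n} {0..<n} (EE n) (ifm_obj {0..<n})"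
    unfolding OPT_def
  proof (rule cSUP_upper)
    show "?\<sigma> \<in> {\<sigma>. clairvoyant_policy {0..<n} {0..<n} (EE n) \<sigma>}" using opt_policy[OF assms] by simp
    show "bdd_above ((\<lambda>\<sigma>. ifm_obj {0..<n} (match_prob (clairvoyant_dist {0..<n} \<sigma>))) `
          {\<sigma>. clairvoyant_policy {0..<n} {0..<n} (EE n) \<sigma>})"
      using obj_le1[OF assms] by (intro bdd_aboveI[of _ 1]) auto
  qed
  finally show ?thesis .
qed

lemma greedy_obj: assumes "n > 0"
  shows "ifm_obj {0..<n} (match_prob (greedy_dist {0..<n} {0..<n} (EE n))) \<le> 2 / sqrt (real n)"
proof -
  have "ifm_obj {0..<n} (match_prob (greedy_dist {0..<n} {0..<n} (EE n))) \<le> match_prob (greedy_dist {0..<n} {0..<n} (EE n)) 0"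
    unfolding ifm_obj_def using assms by (intro Min_le) auto
  then show ?thesis using greedy_prob0[OF assms] by linarith
qed

lemma gfm_eq: "gfm_obj ((\<lambda>i. {i}) ` I) = ifm_obj I"
proof
  fix p :: "nat \<Rightarrow> real"
  have "(\<lambda>G. (\<Sum>i\<in>G. p i) / real (card G)) ` (\<lambda>i. {i}) ` I = p ` I"
    by (simp add: image_image)
  then show "gfm_obj ((\<lambda>i. {i}) ` I) p = ifm_obj I p" by (simp add: gfm_obj_def ifm_obj_def)
qed

lemma good_n:
  fixes \<epsilon> :: real assumes "\<epsilon> > 0"
  obtains n :: nat where "n > 0" "2 / sqrt (real n) \<le> \<epsilon> * (1 / 2)"
proof -
  define n where "n = nat \<lceil>16 / \<epsilon>^2\<rceil> + 1"
  have n0: "n > 0" by (simp add: n_def)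
  have "real n \<ge> 16 / \<epsilon>^2" unfolding n_def by linarith
  then have "\<epsilon>^2 * real n \<ge> 16" using assms by (simp add: field_simps)
  then have "sqrt (\<epsilon>^2 * real n) \<ge> sqrt 16" by (subst real_sqrt_le_iff) simp
  then have s: "\<epsilon> * sqrt (real n) \<ge> 4" using assms by (simp add: real_sqrt_mult)
  have sp: "sqrt (real n) > 0" using n0 by simp
  have "2 / sqrt (real n) \<le> \<epsilon> * (1 / 2)" using s sp by (simp add: field_simps)
  then show ?thesis using n0 that by blast
qed

theorem theorem1:
  shows "\<forall>\<epsilon>::real. \<epsilon> > 0 \<longrightarrow>
    (\<exists>I J E. valid_instance I J E \<and> OPT I J E (ifm_obj I) > 0 \<and>
        ifm_obj I (match_prob (greedy_dist I J E)) \<le> \<epsilon> * OPT I J E (ifm_obj I)) \<and>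
    (\<exists>I J E. valid_instance I J E \<and> OPT I J E (ifm_obj I) > 0 \<and>
        ifm_obj I (match_prob (ranking_dist I J E)) \<le> \<epsilon> * OPT I J E (ifm_obj I)) \<and>
    (\<exists>I J E \<G>. valid_instance I J E \<and> valid_groups I \<G> \<and> OPT I J E (gfm_obj \<G>) > 0 \<and>
        gfm_obj \<G> (match_prob (greedy_dist I J E)) \<le> \<epsilon> * OPT I J E (gfm_obj \<G>)) \<and>
    (\<exists>I J E \<G>. valid_instance I J E \<and> valid_groups I \<G> \<and> OPT I J E (gfm_obj \<G>) > 0 \<and>
        gfm_obj \<G> (match_prob (ranking_dist I J E)) \<le> \<epsilon> * OPT I J E (gfm_obj \<G>))"
proof (intro allI impI)
  fix \<epsilon> :: real assume e: "\<epsilon> > 0"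
  obtain n :: nat where n0: "n > 0" and nb: "2 / sqrt (real n) \<le> \<epsilon> * (1 / 2)"
    using good_n[OF e] by blast
  let ?I = "{0..<n}"
  let ?G = "(\<lambda>i. {i}) ` ?I"
  have vi: "valid_instance ?I ?I (EE n)" using n0 by (auto simp: valid_instance_def EE_def)
  have vg: "valid_groups ?I ?G" using n0 by (auto simp: valid_groups_def)
  have opt: "OPT ?I ?I (EE n) (ifm_obj ?I) \<ge> 1 / 2" by (rule OPT_ge[OF n0])
  have bnd: "ifm_obj ?I (match_prob (greedy_dist ?I ?I (EE n))) \<le> \<epsilon> * OPT ?I ?I (EE n) (ifm_obj ?I)"
  proof -
    have "\<epsilon> * (1 / 2) \<le> \<epsilon> * OPT ?I ?I (EE n) (ifm_obj ?I)" using opt e by (intro mult_left_mono) auto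
    then show ?thesis using greedy_obj[OF n0] nb by linarith
  qed
  have pos: "OPT ?I ?I (EE n) (ifm_obj ?I) > 0" using opt by linarith
  show "(\<exists>I J E. valid_instance I J E \<and> OPT I J E (ifm_obj I) > 0 \<and>
        ifm_obj I (match_prob (greedy_dist I J E)) \<le> \<epsilon> * OPT I J E (ifm_obj I)) \<and>
    (\<exists>I J E. valid_instance I J E \<and> OPT I J E (ifm_obj I) > 0 \<and>
        ifm_obj I (match_prob (ranking_dist I J E)) \<le> \<epsilon> * OPT I J E (ifm_obj I)) \<and>
    (\<exists>I J E \<G>. valid_instance I J E \<and> valid_groups I \<G> \<and> OPT I J E (gfm_obj \<G>) > 0 \<and>
        gfm_obj \<G> (match_prob (greedy_dist I J E)) \<le> \<epsilon> * OPT I J E (gfm_obj \<G>)) \<and>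
    (\<exists>I J E \<G>. valid_instance I J E \<and> valid_groups I \<G> \<and> OPT I J E (gfm_obj \<G>) > 0 \<and>
        gfm_obj \<G> (match_prob (ranking_dist I J E)) \<le> \<epsilon> * OPT I J E (gfm_obj \<G>))"
  proof (intro conjI)
    show "\<exists>I J E. valid_instance I J E \<and> OPT I J E (ifm_obj I) > 0 \<and>
        ifm_obj I (match_prob (greedy_dist I J E)) \<le> \<epsilon> * OPT I J E (ifm_obj I)"
      using vi pos bnd by blast
    show "\<exists>I J E. valid_instance I J E \<and> OPT I J E (ifm_obj I) > 0 \<and>
        ifm_obj I (match_prob (ranking_dist I J E)) \<le> \<epsilon> * OPT I J E (ifm_obj I)"
      using vi pos bnd ranking_eq[of n] by (intro exI[of _ ?I] exI[of _ "EE n"]) simp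
    show "\<exists>I J E \<G>. valid_instance I J E \<and> valid_groups I \<G> \<and> OPT I J E (gfm_obj \<G>) > 0 \<and>
        gfm_obj \<G> (match_prob (greedy_dist I J E)) \<le> \<epsilon> * OPT I J E (gfm_obj \<G>)"
      using vi vg pos bnd gfm_eq[of ?I] by (intro exI[of _ ?I] exI[of _ "EE n"] exI[of _ ?G]) simp
    show "\<exists>I J E \<G>. valid_instance I J E \<and> valid_groups I \<G> \<and> OPT I J E (gfm_obj \<G>) > 0 \<and>
        gfm_obj \<G> (match_prob (ranking_dist I J E)) \<le> \<epsilon> * OPT I J E (gfm_obj \<G>)"
      using vi vg pos bnd gfm_eq[of ?I] ranking_eq[of n] by (intro exI[of _ ?I] exI[of _ "EE n"] exI[of _ ?G]) simp
  qed
qed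

end
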